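(* Let $\mathcal X$ be finite, $P_0,P_1$ distributions on $\mathcal X$ with full support, $\gamma>0$ and $\alpha>0$. Define $$\theta_0^{\rm dist}=\frac2\alpha\max_{Q:\,D(Q\|P_0)=\gamma}\mathrm{Var}_{P_0}\Big(\frac{Q(X)}{P_0(X)}\Big),\qquad \theta_0^{\rm adv}=\frac2\alpha\max_{\hat Q:\,D(\hat Q\|P_0)=\gamma}\mathrm{Var}_{\hat Q}\Big(\log\frac{\hat Q(X)}{P_0(X)}\Big).$$ Then $\theta_0^{\rm adv}\le\theta_0^{\rm dist}$.
   Context: $D$ is relative entropy. $\theta_0^{\rm dist}$ is the sensitivity of the type-I error exponent of Hoeffding's generalized likelihood ratio test (decide 1 iff the observation type $\hat T$ satisfies $D(\hat T\|P_0)\ge\gamma$) to mismatch in the test distribution within a divergence ball, and $\theta_0^{\rm adv}$ its sensitivity to adversarial perturbation of the observation type within a divergence ball; $\alpha$ is the order of the Rényi divergence or $f''(1)$ for the $f$-divergence used to define the balls. *)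

theory Defs
  imports Complex_Main
begin

definition is_dist :: "('a::finite \<Rightarrow> real) \<Rightarrow> bool" where
  "is_dist Q \<longleftrightarrow> (\<forall>x. Q x \<ge> 0) \<and> (\<Sum>x\<in>UNIV. Q x) = 1"

text \<open>Relative entropy D(Q||P) (natural log), convention 0 log 0 = 0
  (automatic since ln 0 = 0 in Isabelle).\<close>
definition rel_entropy :: "('a::finite \<Rightarrow> real) \<Rightarrow> ('a \<Rightarrow> real) \<Rightarrow> real" where
  "rel_entropy Q P = (\<Sum>x\<in>UNIV. Q x * ln (Q x / P x))"

definition variance_under :: "('a::finite \<Rightarrow> real) \<Rightarrow> ('a \<Rightarrow> real) \<Rightarrow> real" where
  "variance_under P f = (\<Sum>x\<in>UNIV. P x * (f x - (\<Sum>y\<in>UNIV. P y * f y))\<^sup>2)"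

definition theta0_dist :: "real \<Rightarrow> real \<Rightarrow> ('a::finite \<Rightarrow> real) \<Rightarrow> real" where
  "theta0_dist \<alpha> \<gamma> P0 = 2 / \<alpha> *
     Sup {variance_under P0 (\<lambda>x. Q x / P0 x) | Q. is_dist Q \<and> rel_entropy Q P0 = \<gamma>}"

definition theta0_adv :: "real \<Rightarrow> real \<Rightarrow> ('a::finite \<Rightarrow> real) \<Rightarrow> real" where
  "theta0_adv \<alpha> \<gamma> P0 = 2 / \<alpha> *
     Sup {variance_under Q (\<lambda>x. ln (Q x / P0 x)) | Q. is_dist Q \<and> rel_entropy Q P0 = \<gamma>}"

end

theory Submission
  imports Defs
begin

lemma key_mono:
  fixes a b :: real
  assumes "0 < a" "a \<le> b"
  shows "a - 1/a - 2 * ln a \<le> b - 1/b - 2 * ln b"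
proof (rule DERIV_nonneg_imp_increasing_open[OF assms(2)])
  show "continuous_on {a..b} (\<lambda>t. t - 1/t - 2 * ln t)"
    using assms(1) by (intro continuous_intros) auto
  fix x :: real assume x: "a < x" "x < b"
  hence xp: "x > 0" using assms by linarith
  have "DERIV (\<lambda>t. t - 1/t - 2 * ln t) x :> (1 + 1/x^2 - 2/x)"
    using xp by (auto intro!: derivative_eq_intros simp: power2_eq_square field_simps)
  moreover have "1 + 1/x^2 - 2/x = (1 - 1/x)^2"
    using xp by (simp add: power2_eq_square field_simps)
  ultimately show "\<exists>y. DERIV (\<lambda>t. t - 1/t - 2 * ln t) x :> y \<and> 0 \<le> y" by auto
qed

lemma key_ineq:
  fixes r :: real
  assumes "r \<ge> 0"
  shows "r * (ln r)^2 \<le> (r - 1)^2"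
proof (cases "r = 0")
  case True then show ?thesis by simp
next
  case False
  define t where "t = sqrt r"
  have tp: "t > 0" using False assms t_def by auto
  have r: "r = t^2" using assms t_def by simp
  have lnr: "ln r = 2 * ln t" using tp r by (simp add: ln_realpow)
  have "(2 * ln t)^2 \<le> (t - 1/t)^2"
  proof (cases "t \<ge> 1")
    case True
    have "1 - 1/1 - 2 * ln 1 \<le> t - 1/t - 2 * ln t" by (rule key_mono) (use True in auto)
    hence "0 \<le> 2 * ln t" "2 * ln t \<le> t - 1/t" using True by auto
    thus ?thesis by (metis power_mono)
  next
    case False
    have "t - 1/t - 2 * ln t \<le> 1 - 1/1 - 2 * ln 1" by (rule key_mono) (use False tp in auto)
    moreover have "ln t \<le> 0" using False tp by simp
    ultimately have "0 \<le> -(2 * ln t)" "-(2 * ln t) \<le> -(t - 1/t)" by auto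
    hence "(-(2 * ln t))^2 \<le> (-(t - 1/t))^2" by (metis power_mono)
    thus ?thesis by (metis power2_commute minus_diff_eq power2_minus)
  qed
  hence "t^2 * (2 * ln t)^2 \<le> t^2 * (t - 1/t)^2" by (simp add: mult_left_mono)
  also have "t^2 * (t - 1/t)^2 = (t^2 - 1)^2" using tp by (simp add: power2_eq_square field_simps)
  finally show ?thesis using r lnr by simp
qed

lemma pointwise:
  fixes P0 Q :: "'a::finite \<Rightarrow> real"
  assumes P0: "is_dist P0" "\<forall>x. P0 x > 0" and Q: "is_dist Q"
  shows "variance_under Q (\<lambda>x. ln (Q x / P0 x)) \<le> variance_under P0 (\<lambda>x. Q x / P0 x)"
proof -
  have Qn: "\<And>x. Q x \<ge> 0" and Qs: "(\<Sum>x\<in>UNIV. Q x) = 1" using Q by (auto simp: is_dist_def)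
  have Ps: "(\<Sum>x\<in>UNIV. P0 x) = 1" using P0 by (auto simp: is_dist_def)
  define c where "c = (\<Sum>y\<in>UNIV. Q y * ln (Q y / P0 y))"
  have "variance_under Q (\<lambda>x. ln (Q x / P0 x)) = (\<Sum>x\<in>UNIV. Q x * (ln (Q x / P0 x) - c)^2)"
    by (simp add: variance_under_def c_def)
  also have "\<dots> = (\<Sum>x\<in>UNIV. Q x * (ln (Q x / P0 x))^2) - c^2"
  proof -
    have "(\<Sum>x\<in>UNIV. Q x * (ln (Q x / P0 x) - c)^2) =
      (\<Sum>x\<in>UNIV. Q x * (ln (Q x / P0 x))^2) - 2 * c * (\<Sum>x\<in>UNIV. Q x * ln (Q x / P0 x))
        + c^2 * (\<Sum>x\<in>UNIV. Q x)"
      by (simp add: power2_diff algebra_simps sum.distrib sum_subtractf sum_distrib_left sum_distrib_right)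
    thus ?thesis by (simp add: Qs c_def power2_eq_square)
  qed
  also have "\<dots> \<le> (\<Sum>x\<in>UNIV. Q x * (ln (Q x / P0 x))^2)" by simp
  also have "\<dots> = (\<Sum>x\<in>UNIV. P0 x * ((Q x / P0 x) * (ln (Q x / P0 x))^2))"
    using P0(2) by (intro sum.cong) (auto simp: field_simps)
  also have "\<dots> \<le> (\<Sum>x\<in>UNIV. P0 x * ((Q x / P0 x) - 1)^2)"
    using P0(2) Qn by (intro sum_mono mult_left_mono key_ineq) (auto simp: less_imp_le)
  also have "\<dots> = variance_under P0 (\<lambda>x. Q x / P0 x)"
  proof -
    have "(\<Sum>y\<in>UNIV. P0 y * (Q y / P0 y)) = 1"
      using P0(2) Qs by (simp add: less_imp_neq[symmetric])
    thus ?thesis by (simp add: variance_under_def)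
  qed
  finally show ?thesis .
qed

lemma bounded_dist:
  fixes P0 Q :: "'a::finite \<Rightarrow> real"
  assumes P0: "\<forall>x. P0 x > 0" and Q: "is_dist Q"
  shows "variance_under P0 (\<lambda>x. Q x / P0 x) \<le> (\<Sum>x\<in>UNIV. P0 x * (1 / P0 x + (\<Sum>y\<in>UNIV. P0 y * (1 / P0 y)))^2)"
proof -
  have Qn: "\<And>x. Q x \<ge> 0" and Qs: "(\<Sum>x\<in>UNIV. Q x) = 1" using Q by (auto simp: is_dist_def)
  have Q1: "\<And>x. Q x \<le> 1"
  proof -
    fix x
    have "Q x \<le> (\<Sum>x\<in>UNIV. Q x)" by (rule member_le_sum) (use Qn in auto)
    thus "Q x \<le> 1" using Qs by simp
  qed
  have r: "\<And>x. 0 \<le> Q x / P0 x \<and> Q x / P0 x \<le> 1 / P0 x"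
  proof
    fix x
    have p: "0 \<le> P0 x" using P0 by (simp add: less_imp_le)
    show "0 \<le> Q x / P0 x" using Qn[of x] p by simp
    show "Q x / P0 x \<le> 1 / P0 x" by (rule divide_right_mono[OF Q1 p])
  qed
  have m: "0 \<le> (\<Sum>y\<in>UNIV. P0 y * (Q y / P0 y)) \<and> (\<Sum>y\<in>UNIV. P0 y * (Q y / P0 y)) \<le> (\<Sum>y\<in>UNIV. P0 y * (1 / P0 y))"
    using P0 r Qn Q1 by (auto intro!: sum_nonneg sum_mono mult_left_mono simp: less_imp_le)
  show ?thesis unfolding variance_under_def
  proof (intro sum_mono mult_left_mono)
    fix x
    have "\<bar>Q x / P0 x - (\<Sum>y\<in>UNIV. P0 y * (Q y / P0 y))\<bar> \<le> 1 / P0 x + (\<Sum>y\<in>UNIV. P0 y * (1 / P0 y))"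
      using r[of x] m by linarith
    thus "(Q x / P0 x - (\<Sum>y\<in>UNIV. P0 y * (Q y / P0 y)))\<^sup>2 \<le> (1 / P0 x + (\<Sum>y\<in>UNIV. P0 y * (1 / P0 y)))\<^sup>2"
      by (metis abs_le_square_iff abs_of_nonneg order.trans abs_ge_zero power2_abs)
    show "0 \<le> P0 x" using P0 by (simp add: less_imp_le)
  qed
qed

theorem corollary4:
  fixes P0 P1 :: "'a::finite \<Rightarrow> real" and \<gamma> \<alpha> :: real
  assumes "is_dist P0" and "is_dist P1"
    and "\<forall>x. P0 x > 0" and "\<forall>x. P1 x > 0"
    and "\<gamma> > 0" and "\<alpha> > 0"
  shows "theta0_adv \<alpha> \<gamma> P0 \<le> theta0_dist \<alpha> \<gamma> P0"
proof -
  let ?A = "{variance_under Q (\<lambda>x. ln (Q x / P0 x)) | Q. is_dist Q \<and> rel_entropy Q P0 = \<gamma>}"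
  let ?B = "{variance_under P0 (\<lambda>x. Q x / P0 x) | Q. is_dist Q \<and> rel_entropy Q P0 = \<gamma>}"
  have "Sup ?A \<le> Sup ?B"
  proof (cases "?A = {}")
    case True
    hence "?B = {}" by auto
    with True show ?thesis by (simp only:)
  next
    case False
    have bdd: "bdd_above ?B"
      using bounded_dist[OF assms(3)] by (auto simp: bdd_above_def)
    show ?thesis
    proof (rule cSup_mono[OF False bdd])
      fix a assume "a \<in> ?A"
      then obtain Q where "is_dist Q" "rel_entropy Q P0 = \<gamma>" "a = variance_under Q (\<lambda>x. ln (Q x / P0 x))" by auto
      thus "\<exists>b\<in>?B. a \<le> b" using pointwise[OF assms(1,3)] by blast
    qed
  qed
  thus ?thesis unfolding theta0_adv_def theta0_dist_def
    using assms(6) by (intro mult_left_mono) auto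
qed

end
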